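(* Let $\wp\colon\tilde X\to X$ be a $2$-cover of connected graphs, let $G\leq\mathrm{Aut}\,X$ be vertex-transitive, and suppose $\wp$ is $G$-split with a sectional complement. Then $\mathrm{CT}(\wp)$ has a complement within the lifted group $\tilde G$ which is transitive on $V(\tilde X)$ if and only if $G$ has a vertex-transitive subgroup of index $2$.
   Context: Graphs are finite and simple; maps are composed on the right. A regular covering projection $\wp\colon\tilde X\to X$ is a surjective graph homomorphism that is a local bijection on neighbourhoods and such that the group $\mathrm{CT}(\wp)$ of covering transformations (automorphisms $c$ of $\tilde X$ with $c\wp=\wp$) acts regularly on each fibre; it is a $2$-cover if $\mathrm{CT}(\wp)\cong\mathbb{Z}_2$. A lift of $g\in\mathrm{Aut}\,X$ is $\tilde g\in\mathrm{Aut}\,\tilde X$ with $\wp g=\tilde g\wp$; $G$ lifts if each element has a lift, and the lifted group $\tilde G$ consists of all lifts of elements of $G$ (so $\tilde G/\mathrm{CT}(\wp)\cong G$). $\wp$ is $G$-split if $G$ lifts and $\mathrm{CT}(\wp)$ has a complement in $\tilde G$. A section is a set of vertices of $\tilde X$ meeting each fibre in exactly one vertex; a complement is sectional if it leaves some section invariant. *)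

theory Defs
  imports "HOL-Algebra.Coset"
begin

record 'a graph =
  verts :: "'a set"
  adj :: "'a \<Rightarrow> 'a \<Rightarrow> bool"

definition simple_graph :: "'a graph \<Rightarrow> bool" where
  "simple_graph X \<longleftrightarrow> finite (verts X)
     \<and> (\<forall>u v. adj X u v \<longrightarrow> u \<in> verts X \<and> v \<in> verts X)
     \<and> (\<forall>u v. adj X u v \<longrightarrow> adj X v u)
     \<and> (\<forall>u. \<not> adj X u u)"

definition connected_graph :: "'a graph \<Rightarrow> bool" where
  "connected_graph X \<longleftrightarrow> verts X \<noteq> {} \<and>
     (\<forall>u\<in>verts X. \<forall>v\<in>verts X. (adj X)\<^sup>*\<^sup>* u v)"

definition auts :: "'a graph \<Rightarrow> ('a \<Rightarrow> 'a) set" where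
  "auts X = {f. bij_betw f (verts X) (verts X)
                \<and> (\<forall>u\<in>verts X. \<forall>v\<in>verts X. adj X (f u) (f v) \<longleftrightarrow> adj X u v)
                \<and> (\<forall>x. x \<notin> verts X \<longrightarrow> f x = x)}"

definition aut_group :: "'a graph \<Rightarrow> ('a \<Rightarrow> 'a) monoid" where
  "aut_group X = \<lparr>carrier = auts X, mult = (\<lambda>f g. f \<circ> g), one = id\<rparr>"

definition vertex_transitive :: "'a graph \<Rightarrow> ('a \<Rightarrow> 'a) set \<Rightarrow> bool" where
  "vertex_transitive X G \<longleftrightarrow> (\<forall>u\<in>verts X. \<forall>v\<in>verts X. \<exists>g\<in>G. g u = v)"

definition CT :: "'b graph \<Rightarrow> 'a graph \<Rightarrow> ('b \<Rightarrow> 'a) \<Rightarrow> ('b \<Rightarrow> 'b) set" where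
  "CT Xt X p = {c \<in> auts Xt. \<forall>x\<in>verts Xt. p (c x) = p x}"

definition regular_covering :: "'b graph \<Rightarrow> 'a graph \<Rightarrow> ('b \<Rightarrow> 'a) \<Rightarrow> bool" where
  "regular_covering Xt X p \<longleftrightarrow>
     p ` verts Xt = verts X
     \<and> (\<forall>u v. adj Xt u v \<longrightarrow> adj X (p u) (p v))
     \<and> (\<forall>v\<in>verts Xt. bij_betw p {w. adj Xt v w} {w. adj X (p v) w})
     \<and> (\<forall>x\<in>verts Xt. \<forall>y\<in>verts Xt. p y = p x \<longrightarrow> (\<exists>!c. c \<in> CT Xt X p \<and> c x = y))"

definition two_cover :: "'b graph \<Rightarrow> 'a graph \<Rightarrow> ('b \<Rightarrow> 'a) \<Rightarrow> bool" where
  "two_cover Xt X p \<longleftrightarrow> regular_covering Xt X p \<and> card (CT Xt X p) = 2"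

text \<open>gt is a lift of g: (x)p g = (x) gt p for all vertices x (maps composed on the right).\<close>

definition is_lift :: "'b graph \<Rightarrow> ('b \<Rightarrow> 'a) \<Rightarrow> ('a \<Rightarrow> 'a) \<Rightarrow> ('b \<Rightarrow> 'b) \<Rightarrow> bool" where
  "is_lift Xt p g gt \<longleftrightarrow> gt \<in> auts Xt \<and> (\<forall>x\<in>verts Xt. g (p x) = p (gt x))"

definition lifts :: "'b graph \<Rightarrow> ('b \<Rightarrow> 'a) \<Rightarrow> ('a \<Rightarrow> 'a) set \<Rightarrow> bool" where
  "lifts Xt p G \<longleftrightarrow> (\<forall>g\<in>G. \<exists>gt. is_lift Xt p g gt)"

definition lifted_group :: "'b graph \<Rightarrow> ('b \<Rightarrow> 'a) \<Rightarrow> ('a \<Rightarrow> 'a) set \<Rightarrow> ('b \<Rightarrow> 'b) set" where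
  "lifted_group Xt p G = {gt. \<exists>g\<in>G. is_lift Xt p g gt}"

definition CT_complement :: "'b graph \<Rightarrow> 'a graph \<Rightarrow> ('b \<Rightarrow> 'a) \<Rightarrow> ('a \<Rightarrow> 'a) set
    \<Rightarrow> ('b \<Rightarrow> 'b) set \<Rightarrow> bool" where
  "CT_complement Xt X p G K \<longleftrightarrow>
     subgroup K (aut_group Xt) \<and> K \<subseteq> lifted_group Xt p G
     \<and> K \<inter> CT Xt X p = {id}
     \<and> K <#>\<^bsub>aut_group Xt\<^esub> CT Xt X p = lifted_group Xt p G"

definition G_split :: "'b graph \<Rightarrow> 'a graph \<Rightarrow> ('b \<Rightarrow> 'a) \<Rightarrow> ('a \<Rightarrow> 'a) set \<Rightarrow> bool" where
  "G_split Xt X p G \<longleftrightarrow> lifts Xt p G \<and> (\<exists>K. CT_complement Xt X p G K)"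

definition is_section :: "'b graph \<Rightarrow> 'a graph \<Rightarrow> ('b \<Rightarrow> 'a) \<Rightarrow> 'b set \<Rightarrow> bool" where
  "is_section Xt X p S \<longleftrightarrow> S \<subseteq> verts Xt \<and> (\<forall>v\<in>verts X. \<exists>!s. s \<in> S \<and> p s = v)"

definition sectional :: "'b graph \<Rightarrow> 'a graph \<Rightarrow> ('b \<Rightarrow> 'a) \<Rightarrow> ('b \<Rightarrow> 'b) set \<Rightarrow> bool" where
  "sectional Xt X p K \<longleftrightarrow> (\<exists>S. is_section Xt X p S \<and> (\<forall>k\<in>K. k ` S = S))"

end

theory Submission
  imports Defs
begin


definition ainv :: "'a graph \<Rightarrow> ('a \<Rightarrow> 'a) \<Rightarrow> 'a \<Rightarrow> 'a" where
  "ainv X f = (\<lambda>y. if y \<in> verts X then inv_into (verts X) f y else y)"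

lemma auts_id: "id \<in> auts X"
  unfolding auts_def by (auto simp: bij_betw_id)

lemma auts_comp: "f \<in> auts X \<Longrightarrow> g \<in> auts X \<Longrightarrow> f \<circ> g \<in> auts X"
proof -
  assume f: "f \<in> auts X" and g: "g \<in> auts X"
  have bf: "bij_betw f (verts X) (verts X)" and bg: "bij_betw g (verts X) (verts X)"
    using f g unfolding auts_def by auto
  have gi: "\<And>u. u \<in> verts X \<Longrightarrow> g u \<in> verts X" using bg by (auto simp: bij_betw_def)
  show ?thesis unfolding auts_def
  proof (intro CollectI conjI ballI allI impI)
    show "bij_betw (f \<circ> g) (verts X) (verts X)" using bij_betw_trans[OF bg bf] .
    fix u v assume "u \<in> verts X" "v \<in> verts X"
    then show "adj X ((f \<circ> g) u) ((f \<circ> g) v) = adj X u v"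
      using f g gi unfolding auts_def by auto
  next
    fix x assume "x \<notin> verts X" then show "(f \<circ> g) x = x" using f g unfolding auts_def by auto
  qed
qed

lemma auts_in: "f \<in> auts X \<Longrightarrow> x \<in> verts X \<Longrightarrow> f x \<in> verts X"
  unfolding auts_def by (auto simp: bij_betw_def)

lemma auts_out: "f \<in> auts X \<Longrightarrow> x \<notin> verts X \<Longrightarrow> f x = x"
  unfolding auts_def by auto

lemma auts_inj: "f \<in> auts X \<Longrightarrow> x \<in> verts X \<Longrightarrow> y \<in> verts X \<Longrightarrow> f x = f y \<Longrightarrow> x = y"
  unfolding auts_def by (auto simp: bij_betw_def inj_on_def)

lemma ainv_left: assumes "f \<in> auts X" shows "ainv X f \<circ> f = id"
proof
  fix x show "(ainv X f \<circ> f) x = id x"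
  proof (cases "x \<in> verts X")
    case True
    then show ?thesis using assms auts_in[OF assms True]
      unfolding ainv_def auts_def by (auto simp: bij_betw_def inv_into_f_f)
  next
    case False then show ?thesis using auts_out[OF assms False] by (simp add: ainv_def)
  qed
qed

lemma ainv_right: assumes "f \<in> auts X" shows "f \<circ> ainv X f = id"
proof
  fix x show "(f \<circ> ainv X f) x = id x"
  proof (cases "x \<in> verts X")
    case True
    then show ?thesis using assms
      unfolding ainv_def auts_def by (auto simp: bij_betw_def f_inv_into_f)
  next
    case False then show ?thesis using auts_out[OF assms False] by (simp add: ainv_def)
  qed
qed

lemma ainv_auts: assumes f: "f \<in> auts X" shows "ainv X f \<in> auts X"
proof -
  have b: "bij_betw f (verts X) (verts X)" using f unfolding auts_def by auto
  have "bij_betw (inv_into (verts X) f) (verts X) (verts X)"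
    using bij_betw_inv_into[OF b] .
  then have b2: "bij_betw (ainv X f) (verts X) (verts X)"
    by (rule bij_betw_cong[THEN iffD1, rotated]) (simp add: ainv_def)
  have r: "\<And>y. f (ainv X f y) = y" using ainv_right[OF f] by (metis comp_apply id_apply)
  have "adj X (ainv X f u) (ainv X f v) \<longleftrightarrow> adj X u v" if "u \<in> verts X" "v \<in> verts X" for u v
  proof -
    have "ainv X f u \<in> verts X" "ainv X f v \<in> verts X" using b2 that by (auto simp: bij_betw_def)
    then have "adj X (f (ainv X f u)) (f (ainv X f v)) \<longleftrightarrow> adj X (ainv X f u) (ainv X f v)"
      using f unfolding auts_def by blast
    then show ?thesis using r by simp
  qed
  then show ?thesis using b2 unfolding auts_def by (auto simp: ainv_def)
qed

lemma aut_group_group: "group (aut_group X)"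
  apply (rule groupI)
  apply (auto simp: aut_group_def auts_comp auts_id)
  using ainv_auts ainv_left by blast

lemma aut_inv: assumes "f \<in> auts X" shows "inv\<^bsub>aut_group X\<^esub> f = ainv X f"
proof -
  interpret group "aut_group X" by (rule aut_group_group)
  show ?thesis
    apply (rule inv_equality)
    using assms ainv_left ainv_auts by (auto simp: aut_group_def)
qed

lemma ag_simps[simp]: "carrier (aut_group X) = auts X" "mult (aut_group X) f g = f \<circ> g"
  "one (aut_group X) = id"
  by (auto simp: aut_group_def)

lemma ainv_ainv: assumes "f \<in> auts X" shows "ainv X (ainv X f) = f"
proof -
  interpret group "aut_group X" by (rule aut_group_group)
  have "inv\<^bsub>aut_group X\<^esub> (inv\<^bsub>aut_group X\<^esub> f) = f" using assms by (simp add: inv_inv)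
  then show ?thesis using assms ainv_auts aut_inv by metis
qed

lemma finite_auts: assumes "finite (verts X)" shows "finite (auts X)"
proof (rule inj_on_finite[where f="\<lambda>f. restrict f (verts X)" and B="verts X \<rightarrow>\<^sub>E verts X"])
  show "inj_on (\<lambda>f. restrict f (verts X)) (auts X)"
  proof (rule inj_onI)
    fix f g assume "f \<in> auts X" "g \<in> auts X" "restrict f (verts X) = restrict g (verts X)"
    then show "f = g" by (metis auts_out restrict_apply' ext)
  qed
  show "(\<lambda>f. restrict f (verts X)) ` auts X \<subseteq> verts X \<rightarrow>\<^sub>E verts X"
    using auts_in by fastforce
  show "finite (verts X \<rightarrow>\<^sub>E verts X)" using assms by (simp add: finite_PiE)
qed



locale cov =
  fixes Xt :: "'b graph" and X :: "'a graph" and p :: "'b \<Rightarrow> 'a" and G :: "('a \<Rightarrow> 'a) set"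
  assumes finX: "finite (verts X)" and neV: "verts Xt \<noteq> {}"
    and tc: "two_cover Xt X p" and sgG: "subgroup G (aut_group X)" and lf: "lifts Xt p G"
begin

abbreviation "V \<equiv> verts Xt"
abbreviation "W \<equiv> verts X"
abbreviation "CTp \<equiv> CT Xt X p"

definition cc where "cc = (SOME c. c \<in> CTp \<and> c \<noteq> id)"

lemma pV: "x \<in> V \<Longrightarrow> p x \<in> W"
  using tc unfolding two_cover_def regular_covering_def by auto

lemma pW: "w \<in> W \<Longrightarrow> \<exists>x\<in>V. p x = w"
proof -
  assume "w \<in> W"
  moreover have "p ` V = W" using tc unfolding two_cover_def regular_covering_def by auto
  ultimately show ?thesis by (metis image_iff)
qed

lemma CT_uniq: "x \<in> V \<Longrightarrow> y \<in> V \<Longrightarrow> p y = p x \<Longrightarrow> \<exists>!c. c \<in> CTp \<and> c x = y"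
  using tc unfolding two_cover_def regular_covering_def by auto

lemma CT_id: "id \<in> CTp"
  unfolding CT_def using auts_id by auto

lemma cc_ex: "cc \<in> CTp \<and> cc \<noteq> id"
proof -
  have "card CTp = 2" using tc unfolding two_cover_def by auto
  then obtain a b where ab: "CTp = {a,b}" "a \<noteq> b" by (auto simp: card_2_iff)
  then have "\<exists>c. c \<in> CTp \<and> c \<noteq> id" by auto
  then show ?thesis unfolding cc_def by (rule someI_ex)
qed

lemma CT_eq: "CTp = {id, cc}"
proof -
  have "card CTp = 2" using tc unfolding two_cover_def by auto
  then obtain a b where ab: "CTp = {a,b}" "a \<noteq> b" by (auto simp: card_2_iff)
  then show ?thesis using cc_ex CT_id by auto
qed

lemma cc_aut: "cc \<in> auts Xt" using cc_ex unfolding CT_def by auto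
lemma cc_p: "x \<in> V \<Longrightarrow> p (cc x) = p x" using cc_ex unfolding CT_def by auto
lemma cc_in: "x \<in> V \<Longrightarrow> cc x \<in> V" using auts_in[OF cc_aut] .

lemma cc_nofix: assumes x: "x \<in> V" shows "cc x \<noteq> x"
proof
  assume "cc x = x"
  then have "cc = id" using CT_uniq[OF x x refl] cc_ex CT_id by auto
  then show False using cc_ex by auto
qed

lemma cc_cc: "cc \<circ> cc = id"
proof -
  have "cc \<circ> cc \<in> CTp" using cc_ex auts_comp[OF cc_aut cc_aut] cc_in cc_p
    unfolding CT_def by auto
  moreover have "cc \<circ> cc \<noteq> cc"
  proof
    assume "cc \<circ> cc = cc"
    obtain x where x: "x \<in> V" using neV by auto
    then have "cc (cc x) = cc x" using \<open>cc \<circ> cc = cc\<close> by (metis comp_apply)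
    then show False using cc_nofix[OF cc_in[OF x]] by simp
  qed
  ultimately show ?thesis using CT_eq by auto
qed

lemma cc_cc': "cc (cc x) = x" using cc_cc by (metis comp_apply id_apply)

lemma fibre: "x \<in> V \<Longrightarrow> y \<in> V \<Longrightarrow> p y = p x \<Longrightarrow> y = x \<or> y = cc x"
proof -
  assume a: "x \<in> V" "y \<in> V" "p y = p x"
  then obtain c where "c \<in> CTp" "c x = y" using CT_uniq by blast
  then show ?thesis using CT_eq by auto
qed

lemma G_auts: "G \<subseteq> auts X"
  using subgroup.subset[OF sgG] by (simp add: aut_group_def)

lemma lift_cc: "is_lift Xt p id cc"
  unfolding is_lift_def using cc_aut cc_p by auto

lemma lift_aut: "is_lift Xt p g k \<Longrightarrow> k \<in> auts Xt" unfolding is_lift_def by auto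

lemma lift_eq: assumes "is_lift Xt p g k" "is_lift Xt p g' k" "g \<in> auts X" "g' \<in> auts X"
  shows "g = g'"
proof
  fix w show "g w = g' w"
  proof (cases "w \<in> W")
    case True
    then obtain x where "x \<in> V" "p x = w" using pW by auto
    then show ?thesis using assms unfolding is_lift_def by auto
  next
    case False then show ?thesis using assms(3,4) by (simp add: auts_out)
  qed
qed

lemma lift_comp: "is_lift Xt p g k \<Longrightarrow> is_lift Xt p g' k' \<Longrightarrow> is_lift Xt p (g \<circ> g') (k \<circ> k')"
proof -
  assume a: "is_lift Xt p g k" "is_lift Xt p g' k'"
  have "k \<circ> k' \<in> auts Xt" using a by (auto simp: is_lift_def intro: auts_comp)
  moreover have "(g \<circ> g') (p x) = p ((k \<circ> k') x)" if x: "x \<in> V" for x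
  proof -
    have "k' x \<in> V" using a x by (auto simp: is_lift_def intro: auts_in)
    then show ?thesis using a x by (simp add: is_lift_def)
  qed
  ultimately show ?thesis by (simp add: is_lift_def)
qed

lemma lift_ccr: "is_lift Xt p g k \<Longrightarrow> is_lift Xt p g (k \<circ> cc)"
  using lift_comp[OF _ lift_cc] by simp

lemma lift_ccl: "is_lift Xt p g k \<Longrightarrow> is_lift Xt p g (cc \<circ> k)"
  using lift_comp[OF lift_cc] by simp

lemma lift_two: assumes k: "is_lift Xt p g k" and k': "is_lift Xt p g k'" and g: "g \<in> auts X"
  shows "k' = k \<or> k' = k \<circ> cc"
proof -
  have ka: "k \<in> auts Xt" and ka': "k' \<in> auts Xt" using k k' by (auto simp: is_lift_def)
  define d where "d = ainv Xt k \<circ> k'"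
  have da: "d \<in> auts Xt" unfolding d_def by (intro auts_comp ainv_auts ka ka')
  have kd: "k \<circ> d = k'" unfolding d_def using ainv_right[OF ka] by (simp add: comp_assoc[symmetric])
  have "p (d x) = p x" if x: "x \<in> V" for x
  proof -
    have z: "d x \<in> V" using auts_in[OF da x] .
    have "g (p (d x)) = p (k (d x))" using k z by (auto simp: is_lift_def)
    also have "\<dots> = p (k' x)" using kd by (metis comp_apply)
    also have "\<dots> = g (p x)" using k' x by (auto simp: is_lift_def)
    finally show ?thesis using auts_inj[OF g pV[OF z] pV[OF x]] by simp
  qed
  then have "d \<in> CTp" using da unfolding CT_def by auto
  then have "d = id \<or> d = cc" using CT_eq by auto
  then show ?thesis using kd by auto
qed

lemma lift_central: assumes k: "is_lift Xt p g k" and g: "g \<in> auts X"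
  shows "cc \<circ> k = k \<circ> cc"
proof -
  have "cc \<circ> k = k \<or> cc \<circ> k = k \<circ> cc" using lift_two[OF k lift_ccl[OF k] g] .
  moreover have "cc \<circ> k \<noteq> k"
  proof
    assume a: "cc \<circ> k = k"
    obtain x where x: "x \<in> V" using neV by auto
    have "cc (k x) = k x" using a by (metis comp_apply)
    then show False using cc_nofix auts_in[OF lift_aut[OF k] x] by simp
  qed
  ultimately show ?thesis by simp
qed

lemma lift_inv: assumes k: "is_lift Xt p g k" and g: "g \<in> auts X"
  shows "is_lift Xt p (ainv X g) (ainv Xt k)"
proof -
  have ka: "k \<in> auts Xt" using k by (auto simp: is_lift_def)
  have "ainv X g (p x) = p (ainv Xt k x)" if x: "x \<in> V" for x
  proof -
    define y where "y = ainv Xt k x"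
    have y: "y \<in> V" unfolding y_def using auts_in[OF ainv_auts[OF ka] x] .
    have ky: "k y = x" unfolding y_def using ainv_right[OF ka] by (metis comp_apply id_apply)
    have "g (p y) = p x" using k y ky by (auto simp: is_lift_def)
    then have "ainv X g (p x) = ainv X g (g (p y))" by simp
    also have "\<dots> = p y" using ainv_left[OF g] by (metis comp_apply id_apply)
    finally show ?thesis unfolding y_def .
  qed
  then show ?thesis using ainv_auts[OF ka] by (auto simp: is_lift_def)
qed

end


context cov begin

lemma G_fin: "finite G" using finite_subset[OF G_auts finite_auts[OF finX]] .

lemma G_id: "id \<in> G" using subgroup.one_closed[OF sgG] by simp
lemma G_comp: "g \<in> G \<Longrightarrow> h \<in> G \<Longrightarrow> g \<circ> h \<in> G" using subgroup.m_closed[OF sgG] by fastforce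
lemma G_inv: "g \<in> G \<Longrightarrow> ainv X g \<in> G"
  using subgroup.m_inv_closed[OF sgG] aut_inv G_auts by fastforce

lemma sub_id: "subgroup K (aut_group Y) \<Longrightarrow> id \<in> K" using subgroup.one_closed by fastforce
lemma sub_comp: "subgroup K (aut_group Y) \<Longrightarrow> g \<in> K \<Longrightarrow> h \<in> K \<Longrightarrow> g \<circ> h \<in> K"
  using subgroup.m_closed by fastforce
lemma sub_auts: "subgroup K (aut_group Y) \<Longrightarrow> K \<subseteq> auts Y"
  using subgroup.subset by fastforce
lemma sub_inv: "subgroup K (aut_group Y) \<Longrightarrow> g \<in> K \<Longrightarrow> ainv Y g \<in> K"
  using subgroup.m_inv_closed aut_inv sub_auts by fastforce

lemma comp_sub: "CT_complement Xt X p G K \<Longrightarrow> subgroup K (aut_group Xt)"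
  unfolding CT_complement_def by auto

lemma comp_lift: "CT_complement Xt X p G K \<Longrightarrow> k \<in> K \<Longrightarrow> \<exists>g\<in>G. is_lift Xt p g k"
  unfolding CT_complement_def lifted_group_def by auto

lemma comp_ex: assumes C: "CT_complement Xt X p G K" and g: "g \<in> G"
  shows "\<exists>k\<in>K. is_lift Xt p g k"
proof -
  obtain gt where gt: "is_lift Xt p g gt" using lf g unfolding lifts_def by auto
  then have "gt \<in> K <#>\<^bsub>aut_group Xt\<^esub> CTp" using C g unfolding CT_complement_def lifted_group_def by auto
  then obtain k d where k: "k \<in> K" "d \<in> CTp" "gt = k \<circ> d" unfolding set_mult_def by auto
  then have "d = id \<or> d = cc" using CT_eq by auto
  then show ?thesis
  proof
    assume "d = id" then show ?thesis using k gt by auto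
  next
    assume "d = cc"
    then have "k = gt \<circ> cc" using k cc_cc by (simp add: comp_assoc)
    then show ?thesis using k lift_ccr[OF gt] by auto
  qed
qed

lemma comp_uniq: assumes C: "CT_complement Xt X p G K" and g: "g \<in> G"
  and k: "k \<in> K" "is_lift Xt p g k" and k': "k' \<in> K" "is_lift Xt p g k'"
  shows "k' = k"
proof -
  have S: "subgroup K (aut_group Xt)" using C comp_sub by auto
  have ka: "k \<in> auts Xt" using k lift_aut by auto
  have "k' = k \<or> k' = k \<circ> cc" using lift_two[OF k(2) k'(2)] g G_auts by auto
  moreover have "k' \<noteq> k \<circ> cc"
  proof
    assume a: "k' = k \<circ> cc"
    have "ainv Xt k \<circ> k' = cc" using a ainv_left[OF ka] by (simp add: comp_assoc[symmetric])
    moreover have "ainv Xt k \<circ> k' \<in> K" using sub_comp[OF S sub_inv[OF S k(1)] k'(1)] .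
    ultimately have "cc \<in> K \<inter> CTp" using cc_ex by auto
    then show False using C cc_ex unfolding CT_complement_def by auto
  qed
  ultimately show ?thesis by auto
qed

definition sel where "sel K g = (THE k. k \<in> K \<and> is_lift Xt p g k)"

lemma sel: assumes "CT_complement Xt X p G K" "g \<in> G"
  shows "sel K g \<in> K \<and> is_lift Xt p g (sel K g)"
proof -
  obtain k where "k \<in> K" "is_lift Xt p g k" using comp_ex[OF assms] by auto
  then have "\<exists>!k. k \<in> K \<and> is_lift Xt p g k" using comp_uniq[OF assms] by blast
  then show ?thesis unfolding sel_def by (rule theI')
qed

lemma sel_eq: assumes "CT_complement Xt X p G K" "g \<in> G" "k \<in> K" "is_lift Xt p g k"
  shows "sel K g = k"
  using comp_uniq[OF assms(1,2) assms(3,4)] sel[OF assms(1,2)] by auto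

lemma sel_comp: assumes C: "CT_complement Xt X p G K" "g \<in> G" "h \<in> G"
  shows "sel K (g \<circ> h) = sel K g \<circ> sel K h"
  using sel_eq[OF C(1) G_comp[OF C(2,3)]] sel[OF C(1) C(2)] sel[OF C(1) C(3)]
    sub_comp[OF comp_sub[OF C(1)]] lift_comp by auto

lemma sel_id: assumes C: "CT_complement Xt X p G K" shows "sel K id = id"
proof -
  have "is_lift Xt p id id" by (simp add: is_lift_def auts_id)
  then show ?thesis using sel_eq[OF C G_id sub_id[OF comp_sub[OF C]]] by simp
qed

lemma sel_inv: assumes C: "CT_complement Xt X p G K" "g \<in> G"
  shows "sel K (ainv X g) = ainv Xt (sel K g)"
  using sel_eq[OF C(1) G_inv[OF C(2)]] sel[OF C] sub_inv[OF comp_sub[OF C(1)]]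
    lift_inv G_auts C(2) by blast

lemma sel_two: assumes "CT_complement Xt X p G K" "CT_complement Xt X p G K'" "g \<in> G"
  shows "sel K g = sel K' g \<or> sel K g = sel K' g \<circ> cc"
  using lift_two sel assms G_auts by blast

end


context cov begin

lemma sect_uniq: "is_section Xt X p S \<Longrightarrow> s \<in> S \<Longrightarrow> s' \<in> S \<Longrightarrow> p s = p s' \<Longrightarrow> s = s'"
proof -
  assume a: "is_section Xt X p S" "s \<in> S" "s' \<in> S" "p s = p s'"
  then have "p s \<in> W" using pV unfolding is_section_def by auto
  then show ?thesis using a unfolding is_section_def by metis
qed

lemma sect_ex: "is_section Xt X p S \<Longrightarrow> w \<in> W \<Longrightarrow> \<exists>s\<in>S. p s = w"
  unfolding is_section_def by metis

lemma sect_V: "is_section Xt X p S \<Longrightarrow> s \<in> S \<Longrightarrow> s \<in> V"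
  unfolding is_section_def by auto

lemma sect_cc: assumes "is_section Xt X p S" "s \<in> S" shows "cc s \<notin> S"
  using sect_uniq[OF assms(1) assms(2)] cc_p cc_nofix sect_V[OF assms] by metis

lemma W_ne: "W \<noteq> {}" using neV pV by auto

lemma dir1:
  assumes C0: "CT_complement Xt X p G K0" and S: "is_section Xt X p S" and KS: "\<forall>k\<in>K0. k ` S = S"
    and C: "CT_complement Xt X p G K" and T: "vertex_transitive Xt K"
  shows "\<exists>H. subgroup H (aut_group X) \<and> H \<subseteq> G \<and> card G = 2 * card H \<and> vertex_transitive X H"
proof -
  define H where "H = {g\<in>G. sel K g = sel K0 g}"
  have HG: "H \<subseteq> G" unfolding H_def by auto
  have notH: "sel K g = sel K0 g \<circ> cc" if "g \<in> G" "g \<notin> H" for g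
    using sel_two[OF C C0 that(1)] that unfolding H_def by auto
  have sH: "subgroup H (aut_group X)"
  proof (rule group.subgroupI[OF aut_group_group])
    show "H \<subseteq> carrier (aut_group X)" using HG G_auts by auto
    show "H \<noteq> {}" using G_id sel_id[OF C] sel_id[OF C0] unfolding H_def by auto
  next
    fix a assume a: "a \<in> H"
    then have "a \<in> auts X" using HG G_auts by auto
    then have "inv\<^bsub>aut_group X\<^esub> a = ainv X a" by (rule aut_inv)
    then show "inv\<^bsub>aut_group X\<^esub> a \<in> H"
      using a G_inv sel_inv[OF C] sel_inv[OF C0] unfolding H_def by auto
  next
    fix a b assume "a \<in> H" "b \<in> H"
    then show "a \<otimes>\<^bsub>aut_group X\<^esub> b \<in> H"
      using G_comp sel_comp[OF C] sel_comp[OF C0] unfolding H_def by auto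
  qed
  have prod: "g1 \<circ> g2 \<in> H" if g: "g1 \<in> G" "g1 \<notin> H" "g2 \<in> G" "g2 \<notin> H" for g1 g2
  proof -
    have c2: "cc \<circ> sel K0 g2 = sel K0 g2 \<circ> cc"
      using lift_central sel[OF C0 g(3)] g(3) G_auts by auto
    have "sel K (g1 \<circ> g2) = (sel K0 g1 \<circ> cc) \<circ> (sel K0 g2 \<circ> cc)"
      using sel_comp[OF C g(1,3)] notH g by simp
    also have "\<dots> = sel K0 g1 \<circ> sel K0 g2"
    proof
      fix x
      have "cc (sel K0 g2 (cc x)) = sel K0 g2 (cc (cc x))" using c2 by (metis comp_apply)
      then show "((sel K0 g1 \<circ> cc) \<circ> (sel K0 g2 \<circ> cc)) x = (sel K0 g1 \<circ> sel K0 g2) x"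
        by (simp add: cc_cc')
    qed
    also have "\<dots> = sel K0 (g1 \<circ> g2)" using sel_comp[OF C0 g(1,3)] by simp
    finally show ?thesis using G_comp g unfolding H_def by auto
  qed
  have invH: "ainv X g \<in> H \<Longrightarrow> g \<in> G \<Longrightarrow> g \<in> H" for g
    using sub_inv[OF sH] ainv_ainv G_auts by fastforce
  obtain s where s: "s \<in> S" using sect_ex[OF S] W_ne by blast
  obtain g0 where g0: "g0 \<in> G" "g0 \<notin> H"
  proof (rule ccontr)
    assume "\<not> thesis"
    with that have all: "\<forall>g\<in>G. g \<in> H" by blast
    obtain k where k: "k \<in> K" "k s = cc s" using T sect_V[OF S s] cc_in unfolding vertex_transitive_def by blast
    obtain g where g: "g \<in> G" "is_lift Xt p g k" using comp_lift[OF C k(1)] by auto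
    have "k = sel K g" using sel_eq[OF C g(1) k(1) g(2)] by simp
    also have "\<dots> = sel K0 g" using all g unfolding H_def by auto
    finally have "k \<in> K0" using sel[OF C0 g(1)] by simp
    then have "k s \<in> S" using KS s by blast
    then show False using k sect_cc[OF S s] by simp
  qed
  have g0a: "g0 \<in> auts X" using g0 G_auts by auto
  have img: "(\<lambda>h. g0 \<circ> h) ` H = G - H"
  proof
    show "(\<lambda>h. g0 \<circ> h) ` H \<subseteq> G - H"
    proof
      fix x assume "x \<in> (\<lambda>h. g0 \<circ> h) ` H"
      then obtain h where h: "h \<in> H" "x = g0 \<circ> h" by auto
      have "x \<in> G" using h HG g0 G_comp by auto
      moreover have "x \<notin> H"
      proof
        assume "x \<in> H"
        then have "x \<circ> ainv X h \<in> H" using sub_comp[OF sH _ sub_inv[OF sH h(1)]] by auto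
        moreover have "h \<circ> ainv X h = id" using h HG G_auts ainv_right by blast
        then have "x \<circ> ainv X h = g0" using h by (simp add: comp_assoc)
        ultimately show False using g0 by simp
      qed
      ultimately show "x \<in> G - H" by simp
    qed
  next
    show "G - H \<subseteq> (\<lambda>h. g0 \<circ> h) ` H"
    proof
      fix g assume g: "g \<in> G - H"
      have "ainv X g0 \<in> G" "ainv X g0 \<notin> H" using G_inv g0 invH by auto
      then have "ainv X g0 \<circ> g \<in> H" using prod g by auto
      moreover have "g = g0 \<circ> (ainv X g0 \<circ> g)" using ainv_right[OF g0a] by (simp add: comp_assoc[symmetric])
      ultimately show "g \<in> (\<lambda>h. g0 \<circ> h) ` H" by blast
    qed
  qed
  have inj: "inj_on (\<lambda>h. g0 \<circ> h) H"
  proof (rule inj_onI)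
    fix x y assume "g0 \<circ> x = g0 \<circ> y"
    then have "ainv X g0 \<circ> g0 \<circ> x = ainv X g0 \<circ> g0 \<circ> y" by (simp add: comp_assoc)
    then show "x = y" using ainv_left[OF g0a] by simp
  qed
  have finH: "finite H" using finite_subset[OF HG G_fin] .
  have "card (G - H) = card H" using card_image[OF inj] img by simp
  moreover have "card G = card H + card (G - H)"
    using card_Diff_subset[OF finH HG] card_mono[OF G_fin HG] by simp
  ultimately have card: "card G = 2 * card H" by simp
  have vt: "vertex_transitive X H" unfolding vertex_transitive_def
  proof (intro ballI)
    fix u v assume u: "u \<in> W" and v: "v \<in> W"
    obtain su where su: "su \<in> S" "p su = u" using sect_ex[OF S u] by blast
    obtain sv where sv: "sv \<in> S" "p sv = v" using sect_ex[OF S v] by blast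
    have suV: "su \<in> V" using sect_V[OF S su(1)] .
    obtain k where k: "k \<in> K" "k su = sv" using T suV sect_V[OF S sv(1)] unfolding vertex_transitive_def by blast
    obtain g where g: "g \<in> G" "is_lift Xt p g k" using comp_lift[OF C k(1)] by auto
    have gu: "g u = v" using g(2) suV su(2) k(2) sv(2) unfolding is_lift_def by auto
    have ksel: "k = sel K g" using sel_eq[OF C g(1) k(1) g(2)] by simp
    have "g \<in> H"
    proof (rule ccontr)
      assume "g \<notin> H"
      then have kk: "k = sel K0 g \<circ> cc" using notH g ksel by simp
      define k0 where "k0 = sel K0 g"
      have k0: "k0 \<in> K0" "is_lift Xt p g k0" using sel[OF C0 g(1)] unfolding k0_def by auto
      have "k0 su \<in> S" using KS k0(1) su(1) by blast
      moreover have "p (k0 su) = p sv" using k0(2) suV su(2) sv(2) gu unfolding is_lift_def by auto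
      ultimately have "k0 su = sv" using sect_uniq[OF S _ sv(1)] by blast
      moreover have "k su = cc (k0 su)"
        using kk lift_central[OF k0(2)] g(1) G_auts unfolding k0_def by (metis comp_apply subsetD)
      ultimately have "sv = cc sv" using k(2) by simp
      then show False using cc_nofix sect_V[OF S sv(1)] by metis
    qed
    then show "\<exists>g\<in>H. g u = v" using gu by blast
  qed
  show ?thesis using sH HG card vt by blast
qed

end


context cov begin

lemma dir2:
  assumes C0: "CT_complement Xt X p G K0" and S: "is_section Xt X p S" and KS: "\<forall>k\<in>K0. k ` S = S"
    and sH: "subgroup H (aut_group X)" and HG: "H \<subseteq> G" and card: "card G = 2 * card H"
    and vtH: "vertex_transitive X H"
  shows "\<exists>K. CT_complement Xt X p G K \<and> vertex_transitive Xt K"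
proof -
  have finH: "finite H" using finite_subset[OF HG G_fin] .
  have Ga: "\<And>g. g \<in> G \<Longrightarrow> g \<in> auts X" using G_auts by auto
  obtain g0 where g0: "g0 \<in> G" "g0 \<notin> H"
  proof (rule ccontr)
    assume "\<not> thesis"
    with that have "G = H" using HG by blast
    then have "card G = 0" using card by simp
    then show False using G_fin G_id by auto
  qed
  have cancel: "x = y" if "g \<in> G" "g \<circ> x = g \<circ> y" for g x y
  proof -
    have "ainv X g \<circ> g \<circ> x = ainv X g \<circ> g \<circ> y" using that(2) by (simp add: comp_assoc)
    then show "x = y" using ainv_left[OF Ga[OF that(1)]] by simp
  qed
  have prod: "g1 \<circ> g2 \<in> H" if g: "g1 \<in> G" "g1 \<notin> H" "g2 \<in> G" "g2 \<notin> H" for g1 g2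
  proof -
    have sub: "(\<lambda>h. g1 \<circ> h) ` H \<subseteq> G - H"
    proof
      fix x assume "x \<in> (\<lambda>h. g1 \<circ> h) ` H"
      then obtain h where h: "h \<in> H" "x = g1 \<circ> h" by auto
      have "x \<in> G" using h HG g G_comp by auto
      moreover have "x \<notin> H"
      proof
        assume "x \<in> H"
        then have xi: "x \<circ> ainv X h \<in> H" using sub_comp[OF sH _ sub_inv[OF sH h(1)]] by auto
        have "h \<circ> ainv X h = id" using h HG G_auts ainv_right by blast
        then have "x \<circ> ainv X h = g1" using h by (simp add: comp_assoc)
        then show False using xi g by simp
      qed
      ultimately show "x \<in> G - H" by simp
    qed
    have inj: "inj_on (\<lambda>h. g1 \<circ> h) H" by (rule inj_onI) (use cancel g(1) in blast)
    have "card ((\<lambda>h. g1 \<circ> h) ` H) = card (G - H)"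
      using card_image[OF inj] card_Diff_subset[OF finH HG] card by simp
    then have eq: "(\<lambda>h. g1 \<circ> h) ` H = G - H"
      using card_subset_eq[OF _ sub] G_fin by auto
    show ?thesis
    proof (rule ccontr)
      assume "g1 \<circ> g2 \<notin> H"
      then have "g1 \<circ> g2 \<in> (\<lambda>h. g1 \<circ> h) ` H" using eq g G_comp by auto
      then obtain h where "h \<in> H" "g1 \<circ> g2 = g1 \<circ> h" by auto
      then show False using cancel[OF g(1)] g by metis
    qed
  qed
  have mixed1: "g1 \<circ> g2 \<notin> H" if g: "g1 \<in> H" "g2 \<in> G" "g2 \<notin> H" for g1 g2
  proof
    assume "g1 \<circ> g2 \<in> H"
    then have "ainv X g1 \<circ> (g1 \<circ> g2) \<in> H" using sub_comp[OF sH sub_inv[OF sH g(1)]] by auto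
    moreover have "ainv X g1 \<circ> g1 = id" using g HG G_auts ainv_left by blast
    then have "ainv X g1 \<circ> (g1 \<circ> g2) = g2" by (simp add: comp_assoc[symmetric])
    ultimately show False using g by simp
  qed
  have mixed2: "g1 \<circ> g2 \<notin> H" if g: "g1 \<in> G" "g1 \<notin> H" "g2 \<in> H" for g1 g2
  proof
    assume "g1 \<circ> g2 \<in> H"
    then have A: "(g1 \<circ> g2) \<circ> ainv X g2 \<in> H" using sub_comp[OF sH _ sub_inv[OF sH g(3)]] by auto
    have "g2 \<circ> ainv X g2 = id" using g HG G_auts ainv_right by blast
    then have "(g1 \<circ> g2) \<circ> ainv X g2 = g1" by (simp add: comp_assoc)
    then show False using A g by simp
  qed
  define e where "e g = (if g \<in> H then sel K0 g else sel K0 g \<circ> cc)" for g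
  have e_lift: "is_lift Xt p g (e g)" if "g \<in> G" for g
    using sel[OF C0 that] lift_ccr unfolding e_def by auto
  have cent: "cc \<circ> sel K0 g = sel K0 g \<circ> cc" if "g \<in> G" for g
    using lift_central sel[OF C0 that] Ga[OF that] by auto
  have cc2: "(a \<circ> cc) \<circ> (b \<circ> cc) = a \<circ> b" if "cc \<circ> b = b \<circ> cc" for a b
  proof
    fix x
    have "cc (b (cc x)) = b (cc (cc x))" using that by (metis comp_apply)
    then show "((a \<circ> cc) \<circ> (b \<circ> cc)) x = (a \<circ> b) x" by (simp add: cc_cc')
  qed
  have e_comp: "e (g1 \<circ> g2) = e g1 \<circ> e g2" if g: "g1 \<in> G" "g2 \<in> G" for g1 g2
  proof -
    have sc: "sel K0 (g1 \<circ> g2) = sel K0 g1 \<circ> sel K0 g2" using sel_comp[OF C0 g] .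
    consider "g1 \<in> H" "g2 \<in> H" | "g1 \<in> H" "g2 \<notin> H" | "g1 \<notin> H" "g2 \<in> H" | "g1 \<notin> H" "g2 \<notin> H"
      by blast
    then show ?thesis
    proof cases
      case 1
      then have "g1 \<circ> g2 \<in> H" using sub_comp[OF sH] by auto
      then show ?thesis using 1 sc unfolding e_def by simp
    next
      case 2
      then show ?thesis using mixed1[OF 2(1) g(2) 2(2)] sc unfolding e_def by (simp add: comp_assoc)
    next
      case 3
      then have "g1 \<circ> g2 \<notin> H" using mixed2 g by blast
      then show ?thesis using 3 sc cent[OF g(2)] unfolding e_def by (simp add: comp_assoc)
    next
      case 4
      then have "g1 \<circ> g2 \<in> H" using prod g by blast
      moreover have "e g1 \<circ> e g2 = sel K0 g1 \<circ> sel K0 g2"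
        using 4 cc2[OF cent[OF g(2)], of "sel K0 g1"] unfolding e_def by simp
      ultimately show ?thesis using sc unfolding e_def by simp
    qed
  qed
  have e_id: "e id = id" using sel_id[OF C0] sub_id[OF sH] unfolding e_def by simp
  have e_aut: "e g \<in> auts Xt" if "g \<in> G" for g using e_lift[OF that] lift_aut by blast
  define K where "K = e ` G"
  have sK: "subgroup K (aut_group Xt)"
  proof (rule group.subgroupI[OF aut_group_group])
    show "K \<subseteq> carrier (aut_group Xt)" using e_aut unfolding K_def by auto
    show "K \<noteq> {}" using G_id unfolding K_def by auto
  next
    fix a assume "a \<in> K"
    then obtain g where g: "g \<in> G" "a = e g" unfolding K_def by auto
    have "e (ainv X g) \<circ> e g = id"
      using e_comp[OF G_inv[OF g(1)] g(1)] ainv_left[OF Ga[OF g(1)]] e_id by simp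
    then have "inv\<^bsub>aut_group Xt\<^esub> (e g) = e (ainv X g)"
      using group.inv_equality[OF aut_group_group] e_aut g(1) G_inv by fastforce
    then show "inv\<^bsub>aut_group Xt\<^esub> a \<in> K" using g G_inv unfolding K_def by auto
  next
    fix a b assume "a \<in> K" "b \<in> K"
    then obtain g h where "g \<in> G" "h \<in> G" "a = e g" "b = e h" unfolding K_def by auto
    then have "a \<circ> b = e (g \<circ> h)" "g \<circ> h \<in> G" using e_comp G_comp by auto
    then show "a \<otimes>\<^bsub>aut_group Xt\<^esub> b \<in> K" unfolding K_def by auto
  qed
  have CK: "CT_complement Xt X p G K"
    unfolding CT_complement_def
  proof (intro conjI)
    show "subgroup K (aut_group Xt)" by (rule sK)
    show KL: "K \<subseteq> lifted_group Xt p G" using e_lift unfolding K_def lifted_group_def by auto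
    show "K \<inter> CTp = {id}"
    proof
      show "{id} \<subseteq> K \<inter> CTp" using e_id G_id CT_id unfolding K_def by force
      show "K \<inter> CTp \<subseteq> {id}"
      proof
        fix k assume k: "k \<in> K \<inter> CTp"
        then obtain g where g: "g \<in> G" "k = e g" unfolding K_def by auto
        have "is_lift Xt p id k" using k unfolding CT_def is_lift_def by auto
        then have "g = id" using lift_eq e_lift[OF g(1)] g Ga[OF g(1)] auts_id by metis
        then show "k \<in> {id}" using g e_id by simp
      qed
    qed
    show "K <#>\<^bsub>aut_group Xt\<^esub> CTp = lifted_group Xt p G"
    proof
      show "K <#>\<^bsub>aut_group Xt\<^esub> CTp \<subseteq> lifted_group Xt p G"
      proof
        fix x assume "x \<in> K <#>\<^bsub>aut_group Xt\<^esub> CTp"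
        then obtain g d where gd: "g \<in> G" "d \<in> CTp" "x = e g \<circ> d"
          unfolding set_mult_def K_def by auto
        then have "d = id \<or> d = cc" using CT_eq by auto
        then have "is_lift Xt p g x" using e_lift[OF gd(1)] lift_ccr gd(3) by auto
        then show "x \<in> lifted_group Xt p G" using gd(1) unfolding lifted_group_def by auto
      qed
      show "lifted_group Xt p G \<subseteq> K <#>\<^bsub>aut_group Xt\<^esub> CTp"
      proof
        fix x assume "x \<in> lifted_group Xt p G"
        then obtain g where g: "g \<in> G" "is_lift Xt p g x" unfolding lifted_group_def by auto
        then have "x = e g \<or> x = e g \<circ> cc" using lift_two e_lift Ga by blast
        then have "\<exists>d\<in>CTp. x = e g \<circ> d" using CT_eq by auto
        then show "x \<in> K <#>\<^bsub>aut_group Xt\<^esub> CTp" using g(1) unfolding set_mult_def K_def by auto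
      qed
    qed
  qed
  have exH: "\<exists>h\<in>H. h a = b" if "a \<in> W" "b \<in> W" for a b
    using vtH that unfolding vertex_transitive_def by auto
  have exN: "\<exists>g\<in>G. g \<notin> H \<and> g a = b" if ab: "a \<in> W" "b \<in> W" for a b
  proof -
    obtain h where h: "h \<in> H" "h (g0 a) = b" using exH auts_in[OF Ga[OF g0(1)] ab(1)] ab(2) by blast
    have "h \<circ> g0 \<in> G" using G_comp h HG g0 by auto
    moreover have "h \<circ> g0 \<notin> H" using mixed1[OF h(1) g0] .
    ultimately show ?thesis using h by auto
  qed
  have vt: "vertex_transitive Xt K" unfolding vertex_transitive_def
  proof (intro ballI)
    fix u v assume u: "u \<in> V" and v: "v \<in> V"
    obtain su where su: "su \<in> S" "p su = p u" using sect_ex[OF S pV[OF u]] by blast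
    obtain sv where sv: "sv \<in> S" "p sv = p v" using sect_ex[OF S pV[OF v]] by blast
    have suV: "su \<in> V" and svV: "sv \<in> V" using sect_V[OF S] su sv by auto
    have uu: "u = su \<or> u = cc su" using fibre[OF suV u] su by auto
    have vv: "v = sv \<or> v = cc sv" using fibre[OF svV v] sv by auto
    have key: "sel K0 g su = sv" if g: "g \<in> G" "g (p u) = p v" for g
    proof -
      have k0: "sel K0 g \<in> K0" "is_lift Xt p g (sel K0 g)" using sel[OF C0 g(1)] by auto
      have "sel K0 g su \<in> S" using KS k0(1) su(1) by blast
      moreover have "p (sel K0 g su) = p sv" using k0(2) suV su(2) sv(2) g(2) unfolding is_lift_def by auto
      ultimately show ?thesis using sect_uniq[OF S _ sv(1)] by blast
    qed
    have cg: "sel K0 g (cc x) = cc (sel K0 g x)" if "g \<in> G" for g x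
      using cent[OF that] by (metis comp_apply)
    have "\<exists>g\<in>G. e g u = v"
    proof (cases "u = su \<longleftrightarrow> v = sv")
      case True
      obtain h where h: "h \<in> H" "h (p u) = p v" using exH pV u v by blast
      have hG: "h \<in> G" using h HG by auto
      have "e h u = v"
      proof (cases "u = su")
        case True
        then have "v = sv" using \<open>u = su \<longleftrightarrow> v = sv\<close> by simp
        then show ?thesis using True key[OF hG h(2)] h(1) unfolding e_def by simp
      next
        case False
        then have "u = cc su" "v = cc sv" using uu vv \<open>u = su \<longleftrightarrow> v = sv\<close> by auto
        then show ?thesis using key[OF hG h(2)] h(1) cg[OF hG] unfolding e_def by simp
      qed
      then show ?thesis using hG by blast
    next
      case False
      obtain g where g: "g \<in> G" "g \<notin> H" "g (p u) = p v" using exN pV u v by blast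
      have "e g u = v"
      proof (cases "u = su")
        case True
        then have "v = cc sv" using False vv by auto
        then show ?thesis using True key[OF g(1) g(3)] g(2) cg[OF g(1)] unfolding e_def by simp
      next
        case F: False
        then have "u = cc su" "v = sv" using uu vv False by auto
        then show ?thesis using key[OF g(1) g(3)] g(2) cc_cc' unfolding e_def by simp
      qed
      then show ?thesis using g by blast
    qed
    then show "\<exists>k\<in>K. k u = v" unfolding K_def by blast
  qed
  show ?thesis using CK vt by blast
qed

end

theorem proposition3p2:
  fixes Xt :: "'b graph" and X :: "'a graph" and p :: "'b \<Rightarrow> 'a"
    and G :: "('a \<Rightarrow> 'a) set"
  assumes "simple_graph Xt" and "simple_graph X"
    and "connected_graph Xt" and "connected_graph X"
    and "two_cover Xt X p"
    and "subgroup G (aut_group X)" and "vertex_transitive X G"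
    and "lifts Xt p G"
    and "\<exists>K. CT_complement Xt X p G K \<and> sectional Xt X p K"
  shows "(\<exists>K. CT_complement Xt X p G K \<and> vertex_transitive Xt K) \<longleftrightarrow>
         (\<exists>H. subgroup H (aut_group X) \<and> H \<subseteq> G \<and> card G = 2 * card H
              \<and> vertex_transitive X H)"
proof -
  have f1: "finite (verts X)" using assms(2) unfolding simple_graph_def by auto
  have f2: "verts Xt \<noteq> {}" using assms(3) unfolding connected_graph_def by auto
  interpret cov Xt X p G unfolding cov_def using f1 f2 assms(5,6,8) by blast
  obtain K0 S where K0: "CT_complement Xt X p G K0" and S: "is_section Xt X p S"
    and KS: "\<forall>k\<in>K0. k ` S = S"
    using assms(9) unfolding sectional_def by auto
  show ?thesis
    using dir1[OF K0 S KS] dir2[OF K0 S KS] by blast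
qed

end
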